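(* Let $C,D\subset\mathbb{R}^d$ be polyhedral cones, $A,B$ conic Borel sets, $F\in\mathcal{F}_i(C)$, $G\in\mathcal{F}_j(D)$ with $i+j=d+k$ and $k>0$. If $F$ and $G$ intersect transversely, then $$\varphi_{F\cap G}(C\cap D,A\cap B)=\Phi_k(F\cap G,A\cap B)\,V_{d-k}\big(N(C,F)+N(D,G)\big).$$
   Context: Work in $\mathbb{R}^d$, $d\ge2$; $\gamma_L$ is the standard Gaussian measure on a linear subspace $L$, $\gamma_d=\gamma_{\mathbb{R}^d}$. Conic Borel sets are Borel sets invariant under multiplication by all $\lambda>0$. A polyhedral cone is $\mathbb{R}^d$ or a finite intersection of closed halfspaces whose boundaries contain the origin; $\mathcal{F}_k(C)$ its set of $k$-faces, $L(F)$ the linear hull of a face $F$, $N(C,F)=\{y:\langle y,x\rangle\le0\ \forall x\in C,\ \langle y,x\rangle=0\ \forall x\in F\}$. Two polyhedral cones $F,G$ intersect transversely if $\dim(F\cap G)=\dim F+\dim G-d$ and $\mathrm{relint}\,F\cap\mathrm{relint}\,G\neq\emptyset$ (in which case $F\cap G$ is a face of $C\cap D$). Curvature measures: $\Phi_k(C,A)=\sum_{F\in\mathcal{F}_k(C)}\gamma_{L(F)}(F\cap A)\gamma_{L(F)^\perp}(N(C,F))$; conic intrinsic volumes $V_k(C)=\sum_{F\in\mathcal{F}_k(C)}\gamma_d(F+N(C,F))$. For a face $F$ of a polyhedral cone $C$ and a conic Borel set $A$, $\varphi_F(C,A):=\gamma_d((A\cap F)+N(C,F))$, which equals the probability that the metric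 projection onto $C$ of a standard Gaussian vector lies in $A\cap\mathrm{relint}\,F$. *)

theory Defs
  imports "HOL-Analysis.Analysis"
begin

definition std_gauss :: "'a::euclidean_space measure" where
  "std_gauss = density lborel
     (\<lambda>x. ennreal ((2 * pi) powr (- real DIM('a) / 2) * exp (- (norm x)\<^sup>2 / 2)))"

definition gamma_d :: "'a::euclidean_space set \<Rightarrow> real" where
  "gamma_d S = measure std_gauss S"

text \<open>Standard Gaussian measure gamma_L on a linear subspace L, realised as the law of the
  orthogonal projection onto L of a standard Gaussian vector of the whole space.\<close>
definition gamma_sub :: "'a::euclidean_space set \<Rightarrow> 'a set \<Rightarrow> real" where
  "gamma_sub L S = measure std_gauss {x. closest_point L x \<in> S}"

definition polyhedral_cone :: "'a::euclidean_space set \<Rightarrow> bool" where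
  "polyhedral_cone C \<longleftrightarrow> C = UNIV \<or>
     (\<exists>Y. finite Y \<and> Y \<noteq> {} \<and> (\<forall>y\<in>Y. y \<noteq> 0) \<and> C = {x. \<forall>y\<in>Y. inner y x \<le> 0})"

definition conic_borel :: "'a::euclidean_space set \<Rightarrow> bool" where
  "conic_borel A \<longleftrightarrow> A \<in> sets borel \<and> (\<forall>t::real. t > 0 \<longrightarrow> (\<forall>x\<in>A. t *\<^sub>R x \<in> A)) "

definition kfaces :: "nat \<Rightarrow> 'a::euclidean_space set \<Rightarrow> 'a set set" where
  "kfaces k C = {F. F face_of C \<and> aff_dim F = int k}"

definition normal_cone :: "'a::euclidean_space set \<Rightarrow> 'a set \<Rightarrow> 'a set" where
  "normal_cone C F = {y. (\<forall>x\<in>C. inner y x \<le> 0) \<and> (\<forall>x\<in>F. inner y x = 0)}"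

definition msum :: "'a::euclidean_space set \<Rightarrow> 'a set \<Rightarrow> 'a set" where
  "msum X Y = {x + y | x y. x \<in> X \<and> y \<in> Y}"

definition curv_measure :: "nat \<Rightarrow> 'a::euclidean_space set \<Rightarrow> 'a set \<Rightarrow> real" where
  "curv_measure k C A = (\<Sum>F\<in>kfaces k C.
      gamma_sub (span F) (F \<inter> A) * gamma_sub (orthogonal_comp (span F)) (normal_cone C F))"

definition conic_intrinsic_volume :: "nat \<Rightarrow> 'a::euclidean_space set \<Rightarrow> real" where
  "conic_intrinsic_volume k C = (\<Sum>F\<in>kfaces k C. gamma_d (msum F (normal_cone C F)))"

definition local_phi :: "'a::euclidean_space set \<Rightarrow> 'a set \<Rightarrow> 'a set \<Rightarrow> real" where
  "local_phi F C A = gamma_d (msum (A \<inter> F) (normal_cone C F))"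

definition transverse :: "'a::euclidean_space set \<Rightarrow> 'a set \<Rightarrow> bool" where
  "transverse F G \<longleftrightarrow> aff_dim (F \<inter> G) = aff_dim F + aff_dim G - int DIM('a) \<and>
     rel_interior F \<inter> rel_interior G \<noteq> {}"

end

theory Submission
  imports Defs "HOL-Probability.Distributions"
begin

lemma ball_measure_eq:
  fixes c d :: "'b::euclidean_space"
  shows "emeasure lborel (ball c r) = emeasure lborel (ball d r)"
proof (cases "r \<ge> 0")
  case True
  have "emeasure lborel (ball c r) = emeasure lebesgue (ball c r)" by simp
  also have "\<dots> = emeasure lebesgue (ball d r)"
    using emeasure_lebesgue_ball_conv_unit_ball[OF True, of c] emeasure_lebesgue_ball_conv_unit_ball[OF True, of d] by simp
  finally show ?thesis by simp
next
  case False then show ?thesis by (simp add: ball_empty)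
qed

lemma open_measure_invariant:
  fixes T :: "'b::euclidean_space \<Rightarrow> 'b"
  assumes lin: "linear T" and iso: "\<And>x. norm (T x) = norm x" and inv: "\<And>x. T (T x) = x"
    and U: "open U"
  shows "emeasure lborel (T -` U) = emeasure lborel U"
proof -
  have Tmeas[measurable]: "T \<in> borel_measurable borel"
    using lin by (intro borel_measurable_continuous_onI linear_continuous_on linear_conv_bounded_linear[THEN iffD1])
  define K where "K = {(x, r::real). r > 0 \<and> ball x r \<subseteq> U}"
  obtain C where C: "countable C" "C \<subseteq> K"
     "pairwise (\<lambda>i j. disjnt (ball (fst i) (snd i)) (ball (fst j) (snd j))) C"
     "negligible(U - (\<Union>i \<in> C. ball (fst i) (snd i)))"
  proof (rule Vitali_covering_theorem_balls[of U K fst snd])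
    fix x and d :: real assume "x \<in> U" "0 < d"
    then obtain e where e: "e > 0" "ball x e \<subseteq> U" using U open_contains_ball by blast
    show "\<exists>i. i \<in> K \<and> x \<in> ball (fst i) (snd i) \<and> snd i < d"
      using e \<open>0 < d\<close> by (intro exI[of _ "(x, min e d / 2)"]) (auto simp: K_def)
  qed blast
  define B where "B = (\<Union>i \<in> C. ball (fst i) (snd i))"
  have BU: "B \<subseteq> U" using C(2) unfolding B_def K_def by fastforce
  have Bm[measurable]: "B \<in> sets borel" unfolding B_def by (intro borel_open open_UN) auto
  have Nnull: "U - B \<in> null_sets lborel"
  proof -
    have "U - B \<in> null_sets lebesgue" using C(4) negligible_iff_null_sets B_def by blast
    moreover have "U - B \<in> sets borel" using U by measurable
    ultimately show ?thesis using null_sets_completion_iff[of _ lborel] by (metis sets_lborel)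
  qed
  have eqU: "U = B \<union> (U - B)" using BU by auto
  have "emeasure lborel U = emeasure lborel B"
    by (subst eqU, rule emeasure_Un_null_set) (auto simp: Nnull)
  also have "\<dots> = (\<integral>\<^sup>+i. emeasure lborel (ball (fst i) (snd i)) \<partial>count_space C)"
    unfolding B_def using C(1,3)
    by (intro emeasure_UN_countable) (auto simp: disjoint_family_on_def pairwise_def disjnt_def)
  also have "\<dots> = (\<integral>\<^sup>+i. emeasure lborel (ball (T (fst i)) (snd i)) \<partial>count_space C)"
    by (metis ball_measure_eq)
  also have "\<dots> = emeasure lborel (\<Union>i \<in> C. ball (T (fst i)) (snd i))"
  proof (rule emeasure_UN_countable[symmetric])
    show "disjoint_family_on (\<lambda>i. ball (T (fst i)) (snd i)) C"
    unfolding disjoint_family_on_def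
    proof (intro ballI impI set_eqI iffI)
      fix i j x assume ij: "i \<in> C" "j \<in> C" "i \<noteq> j"
        and "x \<in> ball (T (fst i)) (snd i) \<inter> ball (T (fst j)) (snd j)"
      then have x: "dist (T (fst i)) x < snd i" "dist (T (fst j)) x < snd j" by auto
      have "dist (fst i) (T x) < snd i" "dist (fst j) (T x) < snd j"
        using x iso lin inv by (metis dist_norm linear_diff)+
      then show "x \<in> {}" using C(3) ij unfolding pairwise_def disjnt_def by fastforce
    qed auto
  qed (use C in auto)
  also have "(\<Union>i \<in> C. ball (T (fst i)) (snd i)) = T -` B"
  proof -
    have "T y \<in> ball a r \<longleftrightarrow> y \<in> ball (T a) r" for y a r
      using iso lin inv by (metis dist_norm linear_diff mem_ball dist_commute)
    then show ?thesis by (auto simp: B_def) (metis fst_conv snd_conv)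
  qed
  also have "emeasure lborel (T -` B) = emeasure lborel (T -` B \<union> T -` (U - B))"
  proof (rule emeasure_Un_null_set[symmetric])
    show "T -` B \<in> sets lborel" by (simp add: measurable_sets_borel[OF Tmeas Bm])
    have "T -` (U - B) = T ` (U - B)" using inv by (auto simp: image_iff) (metis DiffI)
    moreover have "negligible (T ` (U - B))"
      by (rule negligible_differentiable_image_negligible[OF order_refl C(4)[folded B_def]])
         (simp add: lin linear_imp_differentiable differentiable_at_imp_differentiable_on)
    moreover have "T -` (U - B) \<in> sets borel" using U by (intro measurable_sets_borel[OF Tmeas]) measurable
    ultimately show "T -` (U - B) \<in> null_sets lborel"
      using negligible_iff_null_sets null_sets_completion_iff[of _ lborel] by (metis sets_lborel)
  qed
  also have "T -` B \<union> T -` (U - B) = T -` U" using BU by auto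
  finally show ?thesis ..
qed

lemma lborel_isometry_invariant:
  fixes T :: "'b::euclidean_space \<Rightarrow> 'b"
  assumes lin: "linear T" and iso: "\<And>x. norm (T x) = norm x" and inv: "\<And>x. T (T x) = x"
  shows "distr lborel borel T = lborel"
proof -
  have Tmeas[measurable]: "T \<in> borel_measurable borel"
    using lin by (intro borel_measurable_continuous_onI linear_continuous_on linear_conv_bounded_linear[THEN iffD1])
  show ?thesis
  proof (rule measure_eqI_generator_eq[where \<Omega>=UNIV and E="{S. open S}" and A="\<lambda>i. ball 0 (Suc i)"])
    show "Int_stable {S::'b set. open S}" by (auto simp: Int_stable_def)
    show "\<And>X. X \<in> {S. open S} \<Longrightarrow> emeasure (distr lborel borel T) X = emeasure lborel X"
      by (simp add: emeasure_distr open_measure_invariant[OF lin iso inv] less_top)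
    show "sets (distr lborel borel T) = sigma_sets UNIV {S. open S}" by (simp add: sets_borel)
    show "sets lborel = sigma_sets UNIV {S::'b set. open S}" by (simp add: sets_borel)
    show "range (\<lambda>i. ball (0::'b) (Suc i)) \<subseteq> {S. open S}" by auto
    show "(\<Union>i. ball (0::'b) (Suc i)) = UNIV"
    proof (intro set_eqI iffI UNIV_I)
      fix x :: 'b
      obtain n :: nat where "norm x \<le> real n" using real_arch_simple by blast
      then show "x \<in> (\<Union>i. ball 0 (Suc i))" by (intro UN_I[of n]) auto
    qed
    show "emeasure (distr lborel borel T) (ball 0 (Suc i)) \<noteq> \<infinity>" for i
      using emeasure_lborel_ball_finite[of 0 "Suc i"]
      by (simp add: emeasure_distr open_measure_invariant[OF lin iso inv] less_top)
  qed auto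
qed

definition gd :: "'a::euclidean_space \<Rightarrow> real" where
  "gd x = (2 * pi) powr (- real DIM('a) / 2) * exp (- (norm x)\<^sup>2 / 2)"

lemma std_gauss_gd: "std_gauss = density lborel (\<lambda>x. ennreal (gd x))"
  by (simp add: std_gauss_def gd_def)

lemma gd_nonneg: "gd x \<ge> 0" by (simp add: gd_def)

lemma gd_measurable[measurable]: "gd \<in> borel_measurable borel"
  unfolding gd_def by measurable

lemma gd_prod: "gd (x::'a::euclidean_space) = (\<Prod>b\<in>Basis. std_normal_density (x \<bullet> b))"
proof -
  have n: "(norm x)\<^sup>2 = (\<Sum>b\<in>Basis. (x \<bullet> b)\<^sup>2)"
  proof -
    have "(norm x)\<^sup>2 = x \<bullet> x" by (rule power2_norm_eq_inner)
    also have "\<dots> = (\<Sum>b\<in>Basis. (x \<bullet> b)\<^sup>2)" by (subst euclidean_inner) (simp add: power2_eq_square)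
    finally show ?thesis .
  qed
  have c: "(1 / sqrt (2 * pi)) ^ DIM('a) = (2 * pi) powr (- real DIM('a) / 2)"
  proof -
    have "(1 / sqrt (2 * pi)) ^ DIM('a) = ((2 * pi) powr (- 1 / 2)) ^ DIM('a)"
      by (simp add: powr_minus_divide powr_half_sqrt[symmetric])
    also have "\<dots> = (2 * pi) powr (- real DIM('a) / 2)"
      by (simp add: powr_realpow[symmetric] powr_powr)
    finally show ?thesis .
  qed
  have "(\<Prod>b\<in>Basis. std_normal_density (x \<bullet> b))
      = (\<Prod>b\<in>(Basis::'a set). 1 / sqrt (2 * pi)) * (\<Prod>b\<in>Basis. exp (- (x \<bullet> b)\<^sup>2 / 2))"
    unfolding std_normal_density_def prod.distrib by simp
  also have "\<dots> = (2 * pi) powr (- real DIM('a) / 2) * exp (\<Sum>b\<in>Basis. - (x \<bullet> b)\<^sup>2 / 2)"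
    by (simp add: exp_sum c)
  also have "(\<Sum>b\<in>(Basis::'a set). - (x \<bullet> b)\<^sup>2 / 2) = - (norm x)\<^sup>2 / 2"
    by (simp add: n sum_negf sum_divide_distrib)
  finally show ?thesis by (simp add: gd_def)
qed

lemma prob_space_std_gauss: "prob_space (std_gauss :: 'a::euclidean_space measure)"
proof -
  have 1: "(\<integral>\<^sup>+t. ennreal (std_normal_density t) \<partial>lborel) = 1"
    by (subst nn_integral_eq_integral) auto
  have "emeasure (std_gauss :: 'a measure) UNIV
      = (\<integral>\<^sup>+x. (\<Prod>b\<in>Basis. ennreal (std_normal_density (x \<bullet> b))) \<partial>(lborel :: 'a measure))"
    unfolding std_gauss_gd by (subst emeasure_density) (auto simp: gd_prod prod_ennreal intro!: nn_integral_cong)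
  also have "\<dots> = (\<Prod>b\<in>(Basis::'a set). (\<integral>\<^sup>+t. ennreal (std_normal_density t) \<partial>lborel))"
    by (rule nn_integral_lborel_prod) auto
  also have "\<dots> = 1" by (simp add: 1)
  finally show ?thesis by (intro prob_spaceI) (simp add: std_gauss_def)
qed

lemma space_std_gauss[simp]: "space std_gauss = UNIV"
  by (simp add: std_gauss_def)

lemma sets_std_gauss[simp]: "sets std_gauss = sets borel"
  by (simp add: std_gauss_def)

lemma gd_pair: "gd ((x, y) :: 'a::euclidean_space \<times> 'a) = gd x * gd y"
proof -
  have "(2 * pi) powr (- real DIM('a \<times> 'a) / 2) = (2 * pi) powr (- real DIM('a) / 2) * (2 * pi) powr (- real DIM('a) / 2)"
    by (simp add: powr_add[symmetric])
  moreover have "(norm (x, y))\<^sup>2 = (norm x)\<^sup>2 + (norm y)\<^sup>2" by (simp add: norm_Pair)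
  ultimately show ?thesis
    by (simp add: gd_def exp_add[symmetric] field_simps)
qed

lemma std_gauss_pair: "(std_gauss :: ('a::euclidean_space \<times> 'a) measure) = std_gauss \<Otimes>\<^sub>M std_gauss"
proof -
  interpret P: prob_space "std_gauss :: 'a measure" by (rule prob_space_std_gauss)
  have sf: "sigma_finite_measure (density lborel (\<lambda>x. ennreal (gd (x::'a))))"
    using prob_space_std_gauss[where 'a='a] by (intro prob_space_imp_sigma_finite) (simp add: std_gauss_gd)
  have "(std_gauss :: 'a measure) \<Otimes>\<^sub>M (std_gauss :: 'a measure)
      = density (lborel \<Otimes>\<^sub>M lborel) (\<lambda>(x, y). ennreal (gd x) * ennreal (gd y))"
    unfolding std_gauss_gd
    using [[show_types]] by (rule pair_measure_density) (auto simp: sf lborel.sigma_finite_measure_axioms)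
  also have "\<dots> = density lborel (\<lambda>z. ennreal (gd (z::'a\<times>'a)))"
    unfolding lborel_prod
  proof (intro arg_cong[where f="density lborel"] ext)
    fix z :: "'a \<times> 'a"
    show "(case z of (x, y) \<Rightarrow> ennreal (gd x) * ennreal (gd y)) = ennreal (gd z)"
      by (cases z) (simp add: gd_pair ennreal_mult' gd_nonneg)
  qed
  finally show ?thesis by (simp add: std_gauss_gd)
qed

lemma proj_eq:
  fixes L :: "'a::euclidean_space set"
  assumes L: "subspace L" and p: "p \<in> L" and q: "q \<in> orthogonal_comp L"
  shows "closest_point L (p + q) = p"
proof (rule closest_point_unique[symmetric])
  show "convex L" using L by (rule subspace_imp_convex)
  show "closed L" using L by (rule closed_subspace)
  show "p \<in> L" by fact
  show "\<forall>z\<in>L. dist (p + q) p \<le> dist (p + q) z"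
  proof
    fix z assume z: "z \<in> L"
    have "orthogonal (p - z) q" using q subspace_diff[OF L p z] by (auto simp: orthogonal_comp_def)
    then have "(norm ((p - z) + q))\<^sup>2 = (norm (p - z))\<^sup>2 + (norm q)\<^sup>2" by (rule norm_add_Pythagorean)
    then have "(norm q)\<^sup>2 \<le> (norm ((p - z) + q))\<^sup>2" by simp
    then have "norm q \<le> norm ((p - z) + q)" by (simp add: power2_le_iff_abs_le)
    then show "dist (p + q) p \<le> dist (p + q) z" by (simp add: dist_norm algebra_simps)
  qed
qed

lemma proj_eq2:
  fixes L :: "'a::euclidean_space set"
  assumes L: "subspace L" and p: "p \<in> L" and q: "q \<in> orthogonal_comp L"
  shows "closest_point (orthogonal_comp L) (p + q) = q"
proof -
  have "closest_point (orthogonal_comp L) (q + p) = q"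
    by (rule proj_eq[OF subspace_orthogonal_comp q]) (use p orthogonal_comp_subset in blast)
  then show ?thesis by (simp add: add.commute)
qed

lemma proj_decomp:
  fixes L :: "'a::euclidean_space set"
  assumes L: "subspace L"
  shows "closest_point L x \<in> L" "closest_point (orthogonal_comp L) x \<in> orthogonal_comp L"
    "closest_point L x + closest_point (orthogonal_comp L) x = x"
proof -
  obtain p q where pq: "p \<in> L" "q \<in> orthogonal_comp L" "x = p + q"
    using subspace_sum_orthogonal_comp[OF L] by (metis UNIV_I set_plus_elim)
  show "closest_point L x \<in> L" "closest_point (orthogonal_comp L) x \<in> orthogonal_comp L"
    "closest_point L x + closest_point (orthogonal_comp L) x = x"
    using pq proj_eq[OF L] proj_eq2[OF L] by auto
qed

lemma proj_linear:
  fixes L :: "'a::euclidean_space set"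
  assumes L: "subspace L"
  shows "linear (closest_point L)"
proof (rule linearI)
  fix x y :: 'a and c :: real
  let ?P = "closest_point L" and ?Q = "closest_point (orthogonal_comp L)"
  have "?P (x + y) = ?P ((?P x + ?P y) + (?Q x + ?Q y))"
    using proj_decomp[OF L, of x] proj_decomp[OF L, of y] by (simp add: algebra_simps)
  also have "\<dots> = ?P x + ?P y"
    by (rule proj_eq[OF L]) (use proj_decomp[OF L] subspace_add[OF L] subspace_add[OF subspace_orthogonal_comp] in blast)+
  finally show "?P (x + y) = ?P x + ?P y" .
  have "?P (c *\<^sub>R x) = ?P (c *\<^sub>R ?P x + c *\<^sub>R ?Q x)"
    using proj_decomp[OF L, of x] by (metis scaleR_add_right)
  also have "\<dots> = c *\<^sub>R ?P x"
    by (rule proj_eq[OF L]) (use proj_decomp[OF L] subspace_scale[OF L] subspace_scale[OF subspace_orthogonal_comp] in blast)+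
  finally show "?P (c *\<^sub>R x) = c *\<^sub>R ?P x" .
qed

lemma proj_measurable[measurable]:
  fixes L :: "'a::euclidean_space set"
  assumes L: "subspace L"
  shows "closest_point L \<in> borel_measurable borel"
  using proj_linear[OF L]
  by (intro borel_measurable_continuous_onI linear_continuous_on linear_conv_bounded_linear[THEN iffD1])

lemma proj_orth:
  fixes L :: "'a::euclidean_space set"
  assumes L: "subspace L"
  shows "orthogonal (closest_point L u) (closest_point (orthogonal_comp L) v)"
  using proj_decomp(1)[OF L, of u] proj_decomp(2)[OF L, of v] by (auto simp: orthogonal_comp_def)

lemma proj_norm2:
  fixes L :: "'a::euclidean_space set"
  assumes L: "subspace L"
  shows "(norm x)\<^sup>2 = (norm (closest_point L x))\<^sup>2 + (norm (closest_point (orthogonal_comp L) x))\<^sup>2"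
  using norm_add_Pythagorean[OF proj_orth[OF L, of x x]] proj_decomp(3)[OF L, of x] by simp

lemma gd_norm: fixes x y :: "'a::euclidean_space" shows "norm x = norm y \<Longrightarrow> gd x = gd y"
  by (simp add: gd_def)

lemma gauss_indep:
  fixes L :: "'a::euclidean_space set"
  assumes L: "subspace L" and X[measurable]: "X \<in> sets borel" and Y[measurable]: "Y \<in> sets borel"
  shows "measure std_gauss {x. closest_point L x \<in> X \<and> closest_point (orthogonal_comp L) x \<in> Y}
       = measure std_gauss {x. closest_point L x \<in> X} * measure std_gauss {x. closest_point (orthogonal_comp L) x \<in> Y}"
proof -
  interpret G: prob_space "std_gauss :: 'a measure" by (rule prob_space_std_gauss)
  define P where "P = closest_point L"
  define Q where "Q = closest_point (orthogonal_comp L)"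
  have Pm[measurable]: "P \<in> borel_measurable borel" unfolding P_def using L by measurable
  have Qm[measurable]: "Q \<in> borel_measurable borel" unfolding Q_def using subspace_orthogonal_comp by measurable
  have linP: "linear P" unfolding P_def by (rule proj_linear[OF L])
  have linQ: "linear Q" unfolding Q_def by (rule proj_linear[OF subspace_orthogonal_comp])
  have PQ: "P u \<in> L" "Q u \<in> orthogonal_comp L" "P u + Q u = u" for u
    using proj_decomp[OF L] unfolding P_def Q_def by auto
  have PP: "P (P u + Q v) = P u" for u v unfolding P_def Q_def
    by (rule proj_eq[OF L]) (use proj_decomp[OF L] in auto)
  have QP: "Q (P u + Q v) = Q v" for u v unfolding P_def Q_def
    by (rule proj_eq2[OF L]) (use proj_decomp[OF L] in auto)
  have nPQ: "(norm (P u + Q v))\<^sup>2 = (norm (P u))\<^sup>2 + (norm (Q v))\<^sup>2" for u v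
    by (rule norm_add_Pythagorean) (use proj_orth[OF L] in \<open>simp add: P_def Q_def\<close>)
  have nu: "(norm u)\<^sup>2 = (norm (P u))\<^sup>2 + (norm (Q u))\<^sup>2" for u
    unfolding P_def Q_def by (rule proj_norm2[OF L])
  define R :: "'a \<times> 'a \<Rightarrow> 'a \<times> 'a" where "R z = (P (fst z) + Q (snd z), Q (fst z) + P (snd z))" for z
  have linR: "linear R"
    by (rule linearI) (auto simp: R_def linear_add[OF linP] linear_add[OF linQ] linear_scale[OF linP] linear_scale[OF linQ] algebra_simps)
  have normR: "norm (R z) = norm z" for z
  proof -
    obtain u v where z: "z = (u, v)" by (cases z)
    have "(norm (R z))\<^sup>2 = (norm z)\<^sup>2"
      using nPQ[of u v] nPQ[of v u] nu[of u] nu[of v]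
      by (simp add: z R_def norm_Pair add.commute[of "Q u"])
    then show ?thesis by (simp add: power2_eq_iff_nonneg)
  qed
  have invR: "R (R z) = z" for z
  proof -
    obtain u v where z: "z = (u, v)" by (cases z)
    have e: "Q u + P v = P v + Q u" by (rule add.commute)
    show ?thesis using PP[of v u] QP[of v u] PP[of u v] QP[of u v] PQ(3)[of u] PQ(3)[of v]
      by (simp add: z R_def e) (metis add.commute)
  qed
  have Rm[measurable]: "R \<in> borel_measurable borel"
    using linR by (intro borel_measurable_continuous_onI linear_continuous_on linear_conv_bounded_linear[THEN iffD1])
  have invar: "distr (std_gauss :: ('a \<times> 'a) measure) borel R = std_gauss"
  proof -
    have "std_gauss = density (distr lborel borel R) (\<lambda>x. ennreal (gd (x :: 'a \<times> 'a)))"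
      by (simp add: lborel_isometry_invariant[OF linR normR invR] std_gauss_gd)
    also have "\<dots> = distr (density lborel (\<lambda>x. ennreal (gd (R x)))) borel R"
      by (rule density_distr) auto
    also have "(\<lambda>x. ennreal (gd (R x))) = (\<lambda>x. ennreal (gd x))"
      using gd_norm[OF normR] by simp
    finally show ?thesis by (simp add: std_gauss_gd)
  qed
  define S where "S = {x. P x \<in> X \<and> Q x \<in> Y}"
  define A where "A = {x. P x \<in> X}"
  define B where "B = {x. Q x \<in> Y}"
  have [measurable]: "S \<in> sets borel" "A \<in> sets borel" "B \<in> sets borel"
    unfolding S_def A_def B_def by measurable
  have "emeasure std_gauss S = emeasure ((std_gauss :: 'a measure) \<Otimes>\<^sub>M (std_gauss :: 'a measure)) (S \<times> UNIV)"
    using G.emeasure_space_1 by (subst G.emeasure_pair_measure_Times) auto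
  also have "\<dots> = emeasure (distr std_gauss borel R) (S \<times> UNIV)"
    by (metis invar std_gauss_pair)
  also have "\<dots> = emeasure std_gauss (R -` (S \<times> UNIV))"
  proof -
    have "S \<times> UNIV \<in> sets (borel \<Otimes>\<^sub>M (borel :: 'a measure))" by (rule pair_measureI) auto
    then have "S \<times> UNIV \<in> sets (borel :: ('a \<times> 'a) measure)" by (metis borel_prod)
    then show ?thesis by (subst emeasure_distr) (auto simp: measurable_cong_sets[OF sets_std_gauss refl])
  qed
  also have "R -` (S \<times> UNIV) = A \<times> B"
    by (auto simp: R_def S_def A_def B_def PP QP)
  also have "emeasure (std_gauss :: ('a \<times> 'a) measure) (A \<times> B) = emeasure std_gauss A * emeasure std_gauss B"
    by (simp add: std_gauss_pair G.emeasure_pair_measure_Times)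
  finally have "ennreal (measure std_gauss S) = ennreal (measure std_gauss A * measure std_gauss B)"
    by (simp add: G.emeasure_eq_measure ennreal_mult')
  then show ?thesis unfolding S_def A_def B_def P_def Q_def by simp
qed

lemma polyhedral_repr:
  assumes "polyhedral_cone (C :: 'a::euclidean_space set)"
  obtains Y where "finite Y" "C = {x. \<forall>y\<in>Y. y \<bullet> x \<le> 0}"
proof -
  from assms consider "C = UNIV" | "\<exists>Y. finite Y \<and> C = {x. \<forall>y\<in>Y. y \<bullet> x \<le> 0}"
    unfolding polyhedral_cone_def by blast
  then show ?thesis
  proof cases
    case 1 then show ?thesis using that[of "{}"] by simp
  next
    case 2 then show ?thesis using that by blast
  qed
qed

lemma face_zero:
  fixes C :: "'a::euclidean_space set"
  assumes C: "C = {x. \<forall>y\<in>Y. y \<bullet> x \<le> 0}" and F: "F face_of C" "F \<noteq> {}"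
  shows "0 \<in> F"
proof -
  obtain x where x: "x \<in> F" using F by auto
  show ?thesis
  proof (cases "x = 0")
    case True then show ?thesis using x by simp
  next
    case False
    have xC: "x \<in> C" using x face_of_imp_subset[OF F(1)] by auto
    have "0 \<in> C" "2 *\<^sub>R x \<in> C" using xC by (auto simp: C inner_scaleR_right mult_nonpos_nonneg)
    moreover have "x \<in> open_segment 0 (2 *\<^sub>R x)"
      using False by (auto simp: open_segment_def closed_segment_def scaleR_2 intro!: exI[of _ "1/2"])
    ultimately show ?thesis using face_ofD[OF F(1)] x by blast
  qed
qed

lemma relint_zero:
  fixes F :: "'a::euclidean_space set"
  assumes F: "convex F" and x0: "x0 \<in> rel_interior F"
    and le: "\<And>x. x \<in> F \<Longrightarrow> w \<bullet> x \<le> 0" and eq: "w \<bullet> x0 = 0" and x: "x \<in> F"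
  shows "w \<bullet> x = 0"
proof -
  have "x \<in> affine hull F" using x by (rule hull_inc)
  then obtain m where m: "m > 1" "\<forall>e. e > 1 \<and> e \<le> m \<longrightarrow> (1 - e) *\<^sub>R x + e *\<^sub>R x0 \<in> F"
    using convex_rel_interior_if[OF F x0] by metis
  have "(1 - m) *\<^sub>R x + m *\<^sub>R x0 \<in> F" using m by simp
  then have "w \<bullet> ((1 - m) *\<^sub>R x + m *\<^sub>R x0) \<le> 0" by (rule le)
  then have "(1 - m) * (w \<bullet> x) \<le> 0" by (simp add: inner_add_right eq)
  then have "w \<bullet> x \<ge> 0" using m(1) by (simp add: mult_le_0_iff)
  then show ?thesis using le[OF x] by simp
qed

lemma small_step:
  fixes x0 c :: "'a::euclidean_space"
  assumes Y: "finite Y" and x0: "\<And>y. y \<in> Y \<Longrightarrow> y \<bullet> x0 \<le> 0"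
    and c: "\<And>y. y \<in> Y \<Longrightarrow> y \<bullet> x0 = 0 \<Longrightarrow> y \<bullet> c \<le> 0"
  shows "eventually (\<lambda>t. \<forall>y\<in>Y. y \<bullet> (x0 + t *\<^sub>R c) \<le> 0) (at_right 0)"
proof (rule eventually_ball_finite[OF Y], rule ballI)
  fix y assume y: "y \<in> Y"
  show "eventually (\<lambda>t. y \<bullet> (x0 + t *\<^sub>R c) \<le> 0) (at_right 0)"
  proof (cases "y \<bullet> x0 = 0")
    case True
    have "eventually (\<lambda>t::real. t > 0) (at_right 0)" by (simp add: eventually_at_right_less)
    then show ?thesis
      by eventually_elim (use True c[OF y True] in \<open>auto simp: inner_add_right mult_nonneg_nonpos\<close>)
  next
    case False
    then have neg: "y \<bullet> x0 < 0" using x0[OF y] by simp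
    have "((\<lambda>t. y \<bullet> (x0 + t *\<^sub>R c)) \<longlongrightarrow> y \<bullet> (x0 + 0 *\<^sub>R c)) (at_right 0)"
      by (intro tendsto_intros)
    then have "eventually (\<lambda>t. y \<bullet> (x0 + t *\<^sub>R c) < 0) (at_right 0)"
      using neg by (intro order_tendstoD) auto
    then show ?thesis by eventually_elim simp
  qed
qed

lemma farkas_local:
  fixes x0 v :: "'a::euclidean_space"
  assumes Y: "finite Y" and x0: "\<And>y. y \<in> Y \<Longrightarrow> y \<bullet> x0 \<le> 0"
    and v: "\<And>x. (\<forall>y\<in>Y. y \<bullet> x \<le> 0) \<Longrightarrow> v \<bullet> x \<le> 0" and v0: "v \<bullet> x0 = 0"
  shows "v \<in> convex_cone hull {y\<in>Y. y \<bullet> x0 = 0}"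
proof (rule ccontr)
  define K where "K = convex_cone hull {y\<in>Y. y \<bullet> x0 = 0}"
  assume "v \<notin> convex_cone hull {y\<in>Y. y \<bullet> x0 = 0}"
  then have vK: "v \<notin> K" by (simp add: K_def)
  have "closed K" unfolding K_def by (rule closed_convex_cone_hull) (use Y in auto)
  moreover have "convex K" unfolding K_def by (simp add: convex_convex_cone_hull)
  ultimately obtain a b where ab: "a \<bullet> v < b" "\<And>x. x \<in> K \<Longrightarrow> a \<bullet> x > b"
    using separating_hyperplane_closed_point[OF _ _ vK] by blast
  have 0: "0 \<in> K" unfolding K_def by (rule convex_cone_hull_contains_0)
  then have b: "b < 0" using ab(2)[OF 0] by simp
  have aK: "a \<bullet> z \<ge> 0" if z: "z \<in> K" for z
  proof (rule ccontr)
    assume "\<not> a \<bullet> z \<ge> 0"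
    then have neg: "a \<bullet> z < 0" by simp
    define t where "t = b / (a \<bullet> z)"
    have t: "t \<ge> 0" using b neg by (simp add: t_def divide_nonpos_neg)
    have "t *\<^sub>R z \<in> K" unfolding K_def using z t by (simp add: K_def convex_cone_hull_mul)
    then have "a \<bullet> (t *\<^sub>R z) > b" by (rule ab(2))
    moreover have "a \<bullet> (t *\<^sub>R z) = b" using neg by (simp add: t_def)
    ultimately show False by simp
  qed
  have "eventually (\<lambda>t. \<forall>y\<in>Y. y \<bullet> (x0 + t *\<^sub>R (- a)) \<le> 0) (at_right 0)"
  proof (rule small_step[OF Y x0])
    fix y assume "y \<in> Y" "y \<bullet> x0 = 0"
    then have "y \<in> K" unfolding K_def by (intro hull_inc) auto
    then show "y \<bullet> - a \<le> 0" using aK[of y] by (simp add: inner_commute)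
  qed
  moreover have "eventually (\<lambda>t::real. t > 0) (at_right 0)" by (simp add: eventually_at_right_less)
  ultimately have ev: "eventually (\<lambda>t. t > 0 \<and> (\<forall>y\<in>Y. y \<bullet> (x0 + t *\<^sub>R (- a)) \<le> 0)) (at_right 0)"
    by eventually_elim auto
  obtain t where t: "t > 0" "\<forall>y\<in>Y. y \<bullet> (x0 + t *\<^sub>R (- a)) \<le> 0"
    using eventually_happens[OF ev] trivial_limit_at_right_real by blast
  have "v \<bullet> (x0 + t *\<^sub>R (- a)) \<le> 0" using v t(2) by blast
  then have "t * (v \<bullet> a) \<ge> 0" by (simp add: inner_diff_right v0)
  then have "v \<bullet> a \<ge> 0" using t(1) by (simp add: zero_le_mult_iff)
  then show False using ab(1) b by (simp add: inner_commute)
qed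

lemma convex_cone_normal_cone: "convex_cone (normal_cone C F)"
  unfolding convex_cone_iff normal_cone_def
  by (auto simp: inner_add_left mult_nonneg_nonpos intro: add_nonpos_nonpos)

lemma in_segment_mid:
  fixes x z :: "'a::euclidean_space"
  assumes "z \<noteq> 0" "t > 0"
  shows "x \<in> open_segment (x - t *\<^sub>R z) (x + t *\<^sub>R z)"
proof -
  have h: "(1/2::real) + 1/2 = 1" by simp
  have "x = (1 - 1/2) *\<^sub>R (x - t *\<^sub>R z) + (1/2) *\<^sub>R (x + t *\<^sub>R z)"
    by (simp add: algebra_simps) (metis h scaleR_add_left scaleR_one)
  then have "x \<in> closed_segment (x - t *\<^sub>R z) (x + t *\<^sub>R z)"
    unfolding closed_segment_def by (intro CollectI exI[of _ "1/2"]) auto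
  moreover have "x \<noteq> x - t *\<^sub>R z" "x \<noteq> x + t *\<^sub>R z" using assms by auto
  ultimately show ?thesis by (simp add: open_segment_def)
qed

lemma geom_main:
  fixes C D F G :: "'a::euclidean_space set"
  assumes YC: "finite YC" "C = {x. \<forall>y\<in>YC. y \<bullet> x \<le> 0}"
    and YD: "finite YD" "D = {x. \<forall>y\<in>YD. y \<bullet> x \<le> 0}"
    and F: "F face_of C" and G: "G face_of D"
    and x0F: "x0 \<in> rel_interior F" and x0G: "x0 \<in> rel_interior G"
  shows "msum (normal_cone C F) (normal_cone D G) = normal_cone (C \<inter> D) (F \<inter> G)"
    and "span (normal_cone (C \<inter> D) (F \<inter> G)) = orthogonal_comp (span (F \<inter> G))"
proof -
  have FC: "F \<subseteq> C" and GD: "G \<subseteq> D" using F G by (auto dest: face_of_imp_subset)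
  have cF: "convex F" and cG: "convex G" using F G by (auto dest: face_of_imp_convex)
  have x0: "x0 \<in> F" "x0 \<in> G" using x0F x0G rel_interior_subset by auto
  define Y where "Y = YC \<union> YD"
  have Y: "finite Y" using YC YD by (simp add: Y_def)
  have CD: "C \<inter> D = {x. \<forall>y\<in>Y. y \<bullet> x \<le> 0}" using YC YD by (auto simp: Y_def)
  have x0CD: "\<And>y. y \<in> Y \<Longrightarrow> y \<bullet> x0 \<le> 0" using x0 FC GD CD by blast
  have ICN: "y \<in> normal_cone C F" if "y \<in> YC" "y \<bullet> x0 = 0" for y
    unfolding normal_cone_def
  proof safe
    show "y \<bullet> x \<le> 0" if "x \<in> C" for x using that \<open>y \<in> YC\<close> YC by auto
    show "y \<bullet> x = 0" if "x \<in> F" for x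
      by (rule relint_zero[OF cF x0F _ \<open>y \<bullet> x0 = 0\<close> that]) (use FC \<open>y \<in> YC\<close> YC in auto)
  qed
  have IDN: "y \<in> normal_cone D G" if "y \<in> YD" "y \<bullet> x0 = 0" for y
    unfolding normal_cone_def
  proof safe
    show "y \<bullet> x \<le> 0" if "x \<in> D" for x using that \<open>y \<in> YD\<close> YD by auto
    show "y \<bullet> x = 0" if "x \<in> G" for x
      by (rule relint_zero[OF cG x0G _ \<open>y \<bullet> x0 = 0\<close> that]) (use GD \<open>y \<in> YD\<close> YD in auto)
  qed
  have N0: "0 \<in> normal_cone C F" "0 \<in> normal_cone D G" by (auto simp: normal_cone_def)
  show eq1: "msum (normal_cone C F) (normal_cone D G) = normal_cone (C \<inter> D) (F \<inter> G)"
  proof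
    show "msum (normal_cone C F) (normal_cone D G) \<subseteq> normal_cone (C \<inter> D) (F \<inter> G)"
      by (auto simp: msum_def normal_cone_def inner_add_left add_nonpos_nonpos)
    show "normal_cone (C \<inter> D) (F \<inter> G) \<subseteq> msum (normal_cone C F) (normal_cone D G)"
    proof
      fix v assume v: "v \<in> normal_cone (C \<inter> D) (F \<inter> G)"
      have "v \<bullet> x0 = 0" using v x0 by (auto simp: normal_cone_def)
      moreover have "\<And>x. (\<forall>y\<in>Y. y \<bullet> x \<le> 0) \<Longrightarrow> v \<bullet> x \<le> 0" using v CD by (auto simp: normal_cone_def)
      ultimately have "v \<in> convex_cone hull {y\<in>Y. y \<bullet> x0 = 0}"
        using farkas_local[OF Y x0CD] by blast
      also have "{y\<in>Y. y \<bullet> x0 = 0} = {y\<in>YC. y \<bullet> x0 = 0} \<union> {y\<in>YD. y \<bullet> x0 = 0}"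
        by (auto simp: Y_def)
      finally obtain u w where uw: "u \<in> convex_cone hull {y\<in>YC. y \<bullet> x0 = 0}"
          "w \<in> convex_cone hull {y\<in>YD. y \<bullet> x0 = 0}" "v = u + w"
        unfolding convex_cone_hull_Un by blast
      have "convex_cone hull {y\<in>YC. y \<bullet> x0 = 0} \<subseteq> normal_cone C F"
        by (rule hull_minimal) (use ICN convex_cone_normal_cone in auto)
      moreover have "convex_cone hull {y\<in>YD. y \<bullet> x0 = 0} \<subseteq> normal_cone D G"
        by (rule hull_minimal) (use IDN convex_cone_normal_cone in auto)
      ultimately show "v \<in> msum (normal_cone C F) (normal_cone D G)"
        using uw by (auto simp: msum_def)
    qed
  qed
  let ?M = "normal_cone (C \<inter> D) (F \<inter> G)"
  show "span ?M = orthogonal_comp (span (F \<inter> G))"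
  proof
    show "span ?M \<subseteq> orthogonal_comp (span (F \<inter> G))"
    proof (rule span_minimal[OF _ subspace_orthogonal_comp], rule subsetI)
      fix v assume v: "v \<in> ?M"
      have "span (F \<inter> G) \<subseteq> {x. v \<bullet> x = 0}"
        by (rule span_minimal) (use v in \<open>auto simp: normal_cone_def subspace_hyperplane\<close>)
      then show "v \<in> orthogonal_comp (span (F \<inter> G))"
        by (auto simp: orthogonal_comp_def orthogonal_def inner_commute)
    qed
    have "orthogonal_comp (span ?M) \<subseteq> span (F \<inter> G)"
    proof
      fix z assume z: "z \<in> orthogonal_comp (span ?M)"
      have IM: "y \<in> ?M" if "y \<in> Y" "y \<bullet> x0 = 0" for y
      proof -
        have "y \<in> msum (normal_cone C F) (normal_cone D G)"
        proof (cases "y \<in> YC")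
          case True then show ?thesis using ICN[OF True that(2)] N0 unfolding msum_def by force
        next
          case False then have "y \<in> YD" using that Y_def by auto
          then show ?thesis using IDN[OF _ that(2)] N0 unfolding msum_def by force
        qed
        then show ?thesis using eq1 by simp
      qed
      have yz: "y \<bullet> z = 0" if "y \<in> Y" "y \<bullet> x0 = 0" for y
        using z IM[OF that] span_base[of y ?M] by (auto simp: orthogonal_comp_def orthogonal_def)
      have e1: "eventually (\<lambda>t. \<forall>y\<in>Y. y \<bullet> (x0 + t *\<^sub>R z) \<le> 0) (at_right 0)"
      proof (rule small_step[OF Y x0CD])
        fix y assume "y \<in> Y" "y \<bullet> x0 = 0" then show "y \<bullet> z \<le> 0" using yz by simp
      qed
      have e2: "eventually (\<lambda>t. \<forall>y\<in>Y. y \<bullet> (x0 + t *\<^sub>R (- z)) \<le> 0) (at_right 0)"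
      proof (rule small_step[OF Y x0CD])
        fix y assume "y \<in> Y" "y \<bullet> x0 = 0" then show "y \<bullet> - z \<le> 0" using yz by simp
      qed
      have e3: "eventually (\<lambda>t::real. t > 0) (at_right 0)" by (simp add: eventually_at_right_less)
      have "eventually (\<lambda>t. t > 0 \<and> (\<forall>y\<in>Y. y \<bullet> (x0 + t *\<^sub>R z) \<le> 0) \<and> (\<forall>y\<in>Y. y \<bullet> (x0 + t *\<^sub>R (- z)) \<le> 0)) (at_right 0)"
        using e1 e2 e3 by eventually_elim auto
      then obtain t where t: "t > 0" "x0 + t *\<^sub>R z \<in> C \<inter> D" "x0 - t *\<^sub>R z \<in> C \<inter> D"
        using eventually_happens trivial_limit_at_right_real CD by (smt (verit) mem_Collect_eq scaleR_minus_right diff_conv_add_uminus)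
      show "z \<in> span (F \<inter> G)"
      proof (cases "z = 0")
        case True then show ?thesis by (simp add: span_zero)
      next
        case False
        have mid: "x0 \<in> open_segment (x0 - t *\<^sub>R z) (x0 + t *\<^sub>R z)" by (rule in_segment_mid[OF False t(1)])
        have "x0 - t *\<^sub>R z \<in> F \<and> x0 + t *\<^sub>R z \<in> F" using face_ofD[OF F mid] t x0 by blast
        moreover have "x0 - t *\<^sub>R z \<in> G \<and> x0 + t *\<^sub>R z \<in> G" using face_ofD[OF G mid] t x0 by blast
        ultimately have "(x0 + t *\<^sub>R z) - (x0 - t *\<^sub>R z) \<in> span (F \<inter> G)"
          by (intro span_diff span_base) auto
        then have "(1 / (2 * t)) *\<^sub>R ((x0 + t *\<^sub>R z) - (x0 - t *\<^sub>R z)) \<in> span (F \<inter> G)"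
          by (rule span_mul)
        also have "(1 / (2 * t)) *\<^sub>R ((x0 + t *\<^sub>R z) - (x0 - t *\<^sub>R z)) = z"
          using t(1) by (simp add: algebra_simps scaleR_2[symmetric])
        finally show ?thesis .
      qed
    qed
    then have "orthogonal_comp (span (F \<inter> G)) \<subseteq> orthogonal_comp (orthogonal_comp (span ?M))"
      by (rule orthogonal_comp_anti_mono)
    also have "\<dots> = span ?M" by (simp add: orthogonal_comp_self)
    finally show "orthogonal_comp (span (F \<inter> G)) \<subseteq> span ?M" .
  qed
qed

lemma normal_cone_self: "normal_cone S S = orthogonal_comp (span (S :: 'a::euclidean_space set))"
proof (intro set_eqI iffI)
  fix y assume "y \<in> normal_cone S S"
  then have "S \<subseteq> {x. y \<bullet> x = 0}" by (auto simp: normal_cone_def)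
  then have "span S \<subseteq> {x. y \<bullet> x = 0}" by (intro span_minimal) (auto simp: subspace_hyperplane)
  then show "y \<in> orthogonal_comp (span S)"
    by (auto simp: orthogonal_comp_def orthogonal_def inner_commute)
next
  fix y assume "y \<in> orthogonal_comp (span S)"
  then have "\<forall>x\<in>S. y \<bullet> x = 0" using span_base
    by (fastforce simp: orthogonal_comp_def orthogonal_def inner_commute)
  then show "y \<in> normal_cone S S" by (auto simp: normal_cone_def)
qed

lemma gamma_sub_self:
  assumes "subspace (W :: 'a::euclidean_space set)"
  shows "gamma_sub W W = 1"
proof -
  interpret G: prob_space "std_gauss :: 'a measure" by (rule prob_space_std_gauss)
  have "{x. closest_point W x \<in> W} = UNIV"
    using closest_point_in_set[OF closed_subspace[OF assms]] subspace_0[OF assms] by blast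
  then show ?thesis using G.prob_space by (simp add: gamma_sub_def)
qed

lemma dim_orth:
  fixes L :: "'a::euclidean_space set"
  assumes L: "subspace L"
  shows "dim (orthogonal_comp L) = DIM('a) - dim L"
proof -
  have "dim (L \<union> orthogonal_comp L) = dim L + dim (orthogonal_comp L)"
    by (rule dim_orthogonal_sum) (auto simp: orthogonal_comp_def orthogonal_def)
  moreover have "span (L \<union> orthogonal_comp L) = UNIV"
  proof -
    have "x \<in> span (L \<union> orthogonal_comp L)" for x
      using proj_decomp[OF L, of x] by (metis span_add span_base UnI1 UnI2)
    then show ?thesis by auto
  qed
  then have "dim (L \<union> orthogonal_comp L) = DIM('a)" by (metis dim_span dim_UNIV)
  ultimately show ?thesis by simp
qed

lemma closed_normal_cone: "closed (normal_cone S (T :: 'a::euclidean_space set))"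
proof -
  have "normal_cone S T = (\<Inter>x\<in>S. {y. x \<bullet> y \<le> 0}) \<inter> (\<Inter>x\<in>T. {y. x \<bullet> y = 0})"
    by (auto simp: normal_cone_def inner_commute)
  then show ?thesis by (auto intro!: closed_Int closed_INT closed_halfspace_le closed_hyperplane)
qed

lemma kfaces_single:
  assumes "convex (S :: 'a::euclidean_space set)" "aff_dim S = int n"
  shows "kfaces n S = {S}"
proof -
  have "T = S" if "T face_of S" "aff_dim T = int n" for T
    using face_of_aff_dim_lt[OF assms(1) that(1)] that(2) assms(2) by force
  then show ?thesis using face_of_refl[OF assms(1)] assms(2) by (auto simp: kfaces_def)
qed

theorem lemma3p4:
  fixes C D F G A B :: "'a::euclidean_space set" and i j k :: nat
  assumes "DIM('a) \<ge> 2"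
    and "polyhedral_cone C" and "polyhedral_cone D"
    and "conic_borel A" and "conic_borel B"
    and "F \<in> kfaces i C" and "G \<in> kfaces j D"
    and "i + j = DIM('a) + k" and "k > 0"
    and "transverse F G"
  shows "local_phi (F \<inter> G) (C \<inter> D) (A \<inter> B) =
         curv_measure k (F \<inter> G) (A \<inter> B) *
         conic_intrinsic_volume (DIM('a) - k) (msum (normal_cone C F) (normal_cone D G))"
proof -
  obtain YC where YC: "finite YC" "C = {x. \<forall>y\<in>YC. y \<bullet> x \<le> 0}" using polyhedral_repr[OF assms(2)] .
  obtain YD where YD: "finite YD" "D = {x. \<forall>y\<in>YD. y \<bullet> x \<le> 0}" using polyhedral_repr[OF assms(3)] .
  have F: "F face_of C" "aff_dim F = int i" and G: "G face_of D" "aff_dim G = int j"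
    using assms(6,7) by (auto simp: kfaces_def)
  have FG: "aff_dim (F \<inter> G) = int k" using assms(8,10) F G by (simp add: transverse_def)
  obtain x0 where x0: "x0 \<in> rel_interior F" "x0 \<in> rel_interior G"
    using assms(10) by (auto simp: transverse_def)
  have "F \<noteq> {}" "G \<noteq> {}" using F(2) G(2) by (auto simp: aff_dim_empty[symmetric])
  then have zFG: "0 \<in> F \<inter> G" using face_zero[OF YC(2) F(1)] face_zero[OF YD(2) G(1)] by auto
  have cFG: "convex (F \<inter> G)" using F G by (auto intro: convex_Int face_of_imp_convex)
  define L where "L = span (F \<inter> G)"
  have L: "subspace L" by (simp add: L_def)
  have dimL: "dim L = k" using aff_dim_zero[of "F \<inter> G"] zFG FG hull_inc[of 0 "F \<inter> G"]
    by (auto simp: L_def)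
  define M where "M = normal_cone (C \<inter> D) (F \<inter> G)"
  have eqM: "msum (normal_cone C F) (normal_cone D G) = M"
    and spM: "span M = orthogonal_comp L"
    using geom_main[OF YC YD F(1) G(1) x0] by (auto simp: M_def L_def)
  have kd: "k \<le> DIM('a)"
    using aff_dim_le_DIM[of F] aff_dim_le_DIM[of G] F(2) G(2) assms(8) by linarith
  have zM: "0 \<in> M" by (auto simp: M_def normal_cone_def)
  have affM: "aff_dim M = int (DIM('a) - k)"
  proof -
    have "aff_dim M = int (dim M)" using aff_dim_zero[of M] zM hull_inc[of 0 M] by auto
    also have "dim M = dim (span M)" by simp
    also have "\<dots> = DIM('a) - k" using dim_orth[OF L] dimL spM by simp
    finally show ?thesis .
  qed
  have cM: "convex M" using convex_cone_normal_cone[of "C \<inter> D" "F \<inter> G"] by (simp add: M_def convex_cone_def)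
  have kfM: "kfaces (DIM('a) - k) M = {M}" by (rule kfaces_single[OF cM affM])
  have kfFG: "kfaces k (F \<inter> G) = {F \<inter> G}" by (rule kfaces_single[OF cFG FG])
  have nFG: "normal_cone (F \<inter> G) (F \<inter> G) = orthogonal_comp L" by (simp add: normal_cone_self L_def)
  have nM: "normal_cone M M = L" by (simp add: normal_cone_self spM orthogonal_comp_self L)
  define P where "P = closest_point L"
  define Q where "Q = closest_point (orthogonal_comp L)"
  define X where "X = A \<inter> B \<inter> (F \<inter> G)"
  have XL: "X \<subseteq> L" by (auto simp: X_def L_def span_base)
  have MinL: "M \<subseteq> orthogonal_comp L" using span_superset[of M] spM by simp
  have PQ: "P u \<in> L" "Q u \<in> orthogonal_comp L" "P u + Q u = u" for u
    using proj_decomp[OF L] unfolding P_def Q_def by auto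
  have PPQ: "P (a + m) = a" "Q (a + m) = m" if "a \<in> L" "m \<in> orthogonal_comp L" for a m
    using proj_eq[OF L that] proj_eq2[OF L that] by (auto simp: P_def Q_def)
  have set1: "msum X M = {x. P x \<in> X \<and> Q x \<in> M}"
  proof (intro set_eqI iffI)
    fix x assume "x \<in> msum X M"
    then obtain a m where am: "a \<in> X" "m \<in> M" "x = a + m" by (auto simp: msum_def)
    then have "a \<in> L" "m \<in> orthogonal_comp L" using XL MinL by auto
    then show "x \<in> {x. P x \<in> X \<and> Q x \<in> M}" using PPQ am by simp
  next
    fix x assume "x \<in> {x. P x \<in> X \<and> Q x \<in> M}"
    then show "x \<in> msum X M" using PQ(3)[of x] unfolding msum_def by force
  qed
  have set2: "msum M L = {x. Q x \<in> M}"
  proof (intro set_eqI iffI)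
    fix x assume "x \<in> msum M L"
    then obtain a m where "a \<in> L" "m \<in> M" "x = m + a" by (auto simp: msum_def)
    then show "x \<in> {x. Q x \<in> M}" using PPQ(2)[of a m] MinL by (auto simp: add.commute)
  next
    fix x assume "x \<in> {x. Q x \<in> M}"
    then have "x = Q x + P x" "Q x \<in> M" "P x \<in> L" using PQ(1)[of x] PQ(3)[of x] by (auto simp: add.commute)
    then show "x \<in> msum M L" unfolding msum_def by blast
  qed
  have polyCC: "closed {x. \<forall>y\<in>Y. y \<bullet> x \<le> 0} \<and> convex {x. \<forall>y\<in>Y. y \<bullet> x \<le> 0}"
    for Y :: "'a set"
  proof -
    have e: "{x. \<forall>y\<in>Y. y \<bullet> x \<le> 0} = (\<Inter>y\<in>Y. {x. y \<bullet> x \<le> 0})" by auto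
    show ?thesis unfolding e by (auto intro!: closed_INT closed_halfspace_le convex_INT convex_halfspace_le)
  qed
  have closedF: "closed F" and closedG: "closed G"
    using face_of_imp_closed[OF _ _ F(1)] face_of_imp_closed[OF _ _ G(1)] polyCC YC(2) YD(2) by auto
  have Xm: "X \<in> sets borel"
    using assms(4,5) closedF closedG by (auto simp: X_def conic_borel_def)
  have Mm: "M \<in> sets borel" unfolding M_def by (rule borel_closed[OF closed_normal_cone])
  have "local_phi (F \<inter> G) (C \<inter> D) (A \<inter> B) = measure std_gauss {x. P x \<in> X \<and> Q x \<in> M}"
    by (simp add: local_phi_def gamma_d_def M_def[symmetric] X_def[symmetric] set1)
  also have "\<dots> = measure std_gauss {x. P x \<in> X} * measure std_gauss {x. Q x \<in> M}"
    unfolding P_def Q_def by (rule gauss_indep[OF L Xm Mm])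
  also have "measure std_gauss {x. P x \<in> X} = curv_measure k (F \<inter> G) (A \<inter> B)"
    using gamma_sub_self[OF subspace_orthogonal_comp, of L]
    by (simp add: curv_measure_def kfFG nFG L_def[symmetric] gamma_sub_def P_def X_def Int_commute Int_left_commute)
  also have "measure std_gauss {x. Q x \<in> M} = conic_intrinsic_volume (DIM('a) - k) (msum (normal_cone C F) (normal_cone D G))"
    by (simp add: conic_intrinsic_volume_def eqM kfM nM set2 gamma_d_def)
  finally show ?thesis .
qed

end
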